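(* Let $S$ be a finite set with $|S|=\kappa$, and let $r:S\times S\to[0,\infty)$ satisfy $r(x,y)>0$ for all distinct $x,y\in S$ (and $r(x,x)=0$). Consider the inclusion process on $S$ with underlying rates $r$ and parameter $d_N>0$ such that $$\lim_{N\to\infty}d_NN^{\kappa+2}(\log N)^{\kappa-3}=0.$$ Then $\lim_{N\to\infty}\mu_N(\mathcal E_N)=1$.
   Context: $\mathcal H_N=\{\eta\in\{0,1,2,\dots\}^S:\sum_{x\in S}\eta_x=N\}$; for $\eta$ with $\eta_x\ge1$, $\sigma^{x,y}\eta$ is obtained by moving one particle from $x$ to $y$ ($\sigma^{x,y}\eta=\eta$ if $\eta_x=0$). The inclusion process is the continuous-time Markov chain on $\mathcal H_N$ with generator $(\mathcal L_NF)(\eta)=\sum_{x\ne y}\eta_x(d_N+\eta_y)r(x,y)\{F(\sigma^{x,y}\eta)-F(\eta)\}$; $\mu_N$ is its unique invariant probability measure. $\xi_N^x$ is the configuration with all $N$ particles at $x$ and $\mathcal E_N=\{\xi_N^x:x\in S\}$. *)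

theory Defs
  imports "HOL-Analysis.Analysis"
begin

definition config_space :: "nat \<Rightarrow> ('a::finite \<Rightarrow> nat) set" where
  "config_space N = {\<eta>. (\<Sum>x\<in>UNIV. \<eta> x) = N}"

definition move :: "'a \<Rightarrow> 'a \<Rightarrow> ('a \<Rightarrow> nat) \<Rightarrow> ('a \<Rightarrow> nat)" where
  "move x y \<eta> = (if 1 \<le> \<eta> x then (\<eta>(x := \<eta> x - 1))(y := \<eta> y + 1) else \<eta>)"

definition incl_gen :: "real \<Rightarrow> ('a::finite \<Rightarrow> 'a \<Rightarrow> real) \<Rightarrow> (('a \<Rightarrow> nat) \<Rightarrow> real)
    \<Rightarrow> ('a \<Rightarrow> nat) \<Rightarrow> real" where
  "incl_gen dN r F \<eta> =
     (\<Sum>x\<in>UNIV. \<Sum>y\<in>UNIV - {x}.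
        real (\<eta> x) * (dN + real (\<eta> y)) * r x y * (F (move x y \<eta>) - F \<eta>))"

definition invariant_prob :: "nat \<Rightarrow> real \<Rightarrow> ('a::finite \<Rightarrow> 'a \<Rightarrow> real)
    \<Rightarrow> (('a \<Rightarrow> nat) \<Rightarrow> real) \<Rightarrow> bool" where
  "invariant_prob N dN r \<mu> \<longleftrightarrow>
     (\<forall>\<eta>. 0 \<le> \<mu> \<eta>) \<and> (\<forall>\<eta>. \<eta> \<notin> config_space N \<longrightarrow> \<mu> \<eta> = 0) \<and>
     (\<Sum>\<eta>\<in>config_space N. \<mu> \<eta>) = 1 \<and>
     (\<forall>F. (\<Sum>\<eta>\<in>config_space N. \<mu> \<eta> * incl_gen dN r F \<eta>) = 0)"

text \<open>The set E_N of configurations with all N particles on one site.\<close>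
definition condensed :: "nat \<Rightarrow> ('a \<Rightarrow> nat) set" where
  "condensed N = {(\<lambda>y. if y = x then N else 0) | x. True}"

end

theory Submission
  imports Defs
begin

lemma skew_equilibrium:
  fixes B :: "'a::finite \<Rightarrow> 'a \<Rightarrow> real" and S :: "'a set"
  assumes skew: "\<And>x y. B x y = - B y x" and ne: "S \<noteq> {}"
  shows "\<exists>p. (\<forall>x. 0 \<le> p x) \<and> (\<forall>x. x \<notin> S \<longrightarrow> p x = 0) \<and> sum p UNIV = 1
           \<and> (\<forall>x\<in>S. (\<Sum>y\<in>UNIV. B x y * p y) \<le> 0)"
proof -
  define T :: "(real^'a) set" where
    "T = {p. (\<forall>x. 0 \<le> p$x) \<and> (\<forall>x. x \<notin> S \<longrightarrow> p$x = 0) \<and> (\<Sum>x\<in>UNIV. p$x) = 1}"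
  define \<phi> :: "real^'a \<Rightarrow> 'a \<Rightarrow> real" where
    "\<phi> p x = (if x \<in> S then 1 else 0) * max 0 (\<Sum>y\<in>UNIV. B x y * p$y)" for p x
  define f :: "real^'a \<Rightarrow> real^'a" where
    "f p = (\<chi> x. (p$x + \<phi> p x) / (1 + (\<Sum>z\<in>UNIV. \<phi> p z)))" for p
  have phi_nn: "0 \<le> \<phi> p x" for p x by (simp add: \<phi>_def)
  have sphi_nn: "0 \<le> (\<Sum>z\<in>UNIV. \<phi> p z)" for p by (simp add: sum_nonneg phi_nn)
  have closedT: "closed T"
  proof -
    have "T = (\<Inter>x. {p. 0 \<le> p$x}) \<inter> (\<Inter>x\<in>-S. {p. p$x = 0}) \<inter> {p. (\<Sum>x\<in>UNIV. p$x) = 1}"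
      unfolding T_def by auto
    moreover have "closed {p::real^'a. (\<Sum>x\<in>UNIV. p$x) = 1}"
      by (intro closed_Collect_eq continuous_intros)
    moreover have "closed {p::real^'a. 0 \<le> p$x}" for x
      by (intro closed_Collect_le continuous_intros)
    moreover have "closed {p::real^'a. p$x = 0}" for x
      by (intro closed_Collect_eq continuous_intros)
    ultimately show ?thesis by (auto intro!: closed_Int closed_INT)
  qed
  have boundedT: "bounded T"
  proof -
    have "T \<subseteq> cball 0 1"
    proof
      fix p assume "p \<in> T"
      have "norm p \<le> (\<Sum>i\<in>UNIV. \<bar>p$i\<bar>)" by (rule norm_le_l1_cart)
      also have "\<dots> = 1" using \<open>p \<in> T\<close> unfolding T_def by simp
      finally show "p \<in> cball 0 1" by simp
    qed
    thus ?thesis using bounded_cball bounded_subset by blast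
  qed
  have compT: "compact T" using closedT boundedT by (simp add: compact_eq_bounded_closed)
  have convT: "convex T"
    unfolding convex_def T_def
    by (auto simp: sum.distrib sum_distrib_left[symmetric] algebra_simps)
  obtain s where "s \<in> S" using ne by blast
  have neT: "T \<noteq> {}"
  proof -
    have "axis s 1 \<in> T" using \<open>s \<in> S\<close> unfolding T_def by (auto simp: axis_def)
    thus ?thesis by blast
  qed
  have contf: "continuous_on T f"
  proof -
    have den_ne: "1 + (\<Sum>z\<in>UNIV. (if z \<in> S then 1 else 0) * max 0 (\<Sum>y\<in>UNIV. B z y * p$y)) \<noteq> 0" for p
      using sphi_nn[of p] unfolding \<phi>_def by linarith
    show ?thesis unfolding f_def \<phi>_def
      by (intro continuous_on_vec_lambda continuous_intros) (auto simp: den_ne)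
  qed
  have fim: "f \<in> T \<rightarrow> T"
  proof
    fix p assume "p \<in> T"
    have den: "0 < 1 + (\<Sum>z\<in>UNIV. \<phi> p z)" using sphi_nn[of p] by linarith
    have "(\<Sum>x\<in>UNIV. f p $ x) = (\<Sum>x\<in>UNIV. p$x + \<phi> p x) / (1 + (\<Sum>z\<in>UNIV. \<phi> p z))"
      unfolding f_def by (simp add: sum_divide_distrib)
    also have "\<dots> = 1" using \<open>p \<in> T\<close> den unfolding T_def by (simp add: sum.distrib)
    finally have sum1: "(\<Sum>x\<in>UNIV. f p $ x) = 1" .
    have c: "f p $ x = (p$x + \<phi> p x) / (1 + (\<Sum>z\<in>UNIV. \<phi> p z))" for x
      by (simp add: f_def)
    have nn: "0 \<le> f p $ x" for x
      unfolding c using den phi_nn[of p x] \<open>p \<in> T\<close> unfolding T_def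
      by (intro divide_nonneg_pos add_nonneg_nonneg) auto
    have z: "f p $ x = 0" if "x \<notin> S" for x
      unfolding c using that \<open>p \<in> T\<close> unfolding T_def by (simp add: \<phi>_def)
    show "f p \<in> T" unfolding T_def using sum1 nn z by blast
  qed
  obtain p where pT: "p \<in> T" and fp: "f p = p" using brouwer[OF compT convT neT contf fim] by blast
  define Bp where "Bp x = (\<Sum>y\<in>UNIV. B x y * p$y)" for x
  define s where "s = (\<Sum>z\<in>UNIV. \<phi> p z)"
  have den: "0 < 1 + s" using sphi_nn[of p] s_def by linarith
  have fix_eq: "p$x * s = \<phi> p x" for x
  proof -
    have "p$x = (p$x + \<phi> p x) / (1 + s)" using fp unfolding f_def s_def
      by (metis vec_lambda_beta)
    hence "p$x * (1 + s) = p$x + \<phi> p x" using den by (simp add: field_simps)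
    thus ?thesis by (simp add: algebra_simps)
  qed
  have skew0: "(\<Sum>x\<in>UNIV. p$x * Bp x) = 0"
  proof -
    define D where "D = (\<Sum>x\<in>UNIV. \<Sum>y\<in>UNIV. p$x * B x y * p$y)"
    have e1: "(\<Sum>x\<in>UNIV. p$x * Bp x) = D"
      unfolding Bp_def D_def by (simp add: sum_distrib_left mult.assoc)
    have sk: "p$x * B x y * p$y = - (p$y * B y x * p$x)" for x y
      using skew[of x y] by (simp add: algebra_simps)
    have "D = (\<Sum>y\<in>UNIV. \<Sum>x\<in>UNIV. p$x * B x y * p$y)" unfolding D_def by (rule sum.swap)
    also have "\<dots> = (\<Sum>y\<in>UNIV. \<Sum>x\<in>UNIV. - (p$y * B y x * p$x))"
      by (intro sum.cong refl) (rule sk)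
    also have "\<dots> = - D" unfolding D_def by (simp add: sum_negf)
    finally have "D = 0" by simp
    thus ?thesis using e1 by simp
  qed
  have phisq: "\<phi> p x * Bp x = (\<phi> p x)^2" for x
    unfolding \<phi>_def Bp_def by (auto simp: power2_eq_square max_def)
  have "(\<Sum>x\<in>UNIV. (\<phi> p x)^2) = (\<Sum>x\<in>UNIV. \<phi> p x * Bp x)" by (simp add: phisq)
  also have "\<dots> = (\<Sum>x\<in>UNIV. s * (p$x * Bp x))" by (simp add: fix_eq[symmetric] algebra_simps)
  also have "\<dots> = 0" by (simp add: sum_distrib_left[symmetric] skew0)
  finally have "(\<Sum>x\<in>UNIV. (\<phi> p x)^2) = 0" .
  hence phi0: "\<phi> p x = 0" for x
    using sum_nonneg_eq_0_iff[of UNIV "\<lambda>x. (\<phi> p x)^2"] by simp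
  show ?thesis
  proof (intro exI[of _ "\<lambda>x. p$x"] conjI ballI allI impI)
    fix x assume "x \<in> S"
    thus "(\<Sum>y\<in>UNIV. B x y * p$y) \<le> 0" using phi0[of x] unfolding \<phi>_def by (auto simp: max_def split: if_splits)
  qed (use pT in \<open>auto simp: T_def\<close>)
qed


definition hh :: "nat \<Rightarrow> real" where "hh k = (\<Sum>j=1..k. 1 / real j)"

lemma hh_0: "hh 0 = 0" unfolding hh_def by simp

lemma hh_Suc: "hh (Suc k) = hh k + 1 / real (Suc k)"
  unfolding hh_def by simp

lemma hh_nonneg: "0 \<le> hh k" unfolding hh_def by (intro sum_nonneg) simp

lemma hh_le: "hh k \<le> real k"
proof (induction k)
  case 0 thus ?case by (simp add: hh_0)
next
  case (Suc k)
  have h: "1 / real (Suc k) \<le> 1" by simp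
  show ?case unfolding hh_Suc using Suc.IH h by linarith
qed

definition occ :: "('a \<Rightarrow> nat) \<Rightarrow> 'a set" where "occ \<eta> = {x. \<eta> x \<noteq> 0}"

lemma move_sum:
  fixes \<eta> :: "'a::finite \<Rightarrow> nat"
  assumes "x \<noteq> y" "1 \<le> \<eta> x"
  shows "(\<Sum>z\<in>UNIV. move x y \<eta> z) = (\<Sum>z\<in>UNIV. \<eta> z)"
proof -
  have "move x y \<eta> z + (if z = x then 1 else 0) = \<eta> z + (if z = y then 1 else 0)" for z
    using assms by (auto simp: move_def)
  hence "(\<Sum>z\<in>UNIV. move x y \<eta> z + (if z = x then 1 else 0)) = (\<Sum>z\<in>UNIV. \<eta> z + (if z = y then 1 else 0))"
    by simp
  thus ?thesis by (simp add: sum.distrib)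
qed

lemma le_sum_nat: "(\<eta>::'a::finite\<Rightarrow>nat) x \<le> (\<Sum>z\<in>UNIV. \<eta> z)"
  by (rule member_le_sum) auto

lemma finite_config: "finite (config_space N :: ('a::finite \<Rightarrow> nat) set)"
proof -
  have "config_space N \<subseteq> PiE UNIV (\<lambda>_. {..N})"
    unfolding config_space_def using le_sum_nat by (auto simp: PiE_def extensional_def)
  moreover have "finite (PiE (UNIV::'a set) (\<lambda>_. {..N}))" by (intro finite_PiE) auto
  ultimately show ?thesis by (rule finite_subset)
qed

lemma condensed_sub: "condensed N \<subseteq> (config_space N :: ('a::finite \<Rightarrow> nat) set)"
  unfolding condensed_def config_space_def by auto

lemma finite_condensed: "finite (condensed N :: ('a::finite \<Rightarrow> nat) set)"
  by (rule finite_subset[OF condensed_sub finite_config])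

lemma not_condensed:
  fixes \<eta> :: "'a::finite \<Rightarrow> nat"
  assumes C: "\<eta> \<in> config_space N" and nE: "\<eta> \<notin> condensed N"
  shows "\<exists>a b. a \<noteq> b \<and> \<eta> a \<noteq> 0 \<and> \<eta> b \<noteq> 0"
proof (rule ccontr)
  assume H: "\<not> ?thesis"
  show False
  proof (cases "\<exists>a. \<eta> a \<noteq> 0")
    case True
    then obtain a where a: "\<eta> a \<noteq> 0" by blast
    with H have z: "\<forall>b. b \<noteq> a \<longrightarrow> \<eta> b = 0" by blast
    hence eq: "\<eta> = (\<lambda>y. if y = a then \<eta> a else 0)" by auto
    have "N = (\<Sum>z\<in>UNIV. \<eta> z)" using C by (simp add: config_space_def)
    also have "\<dots> = \<eta> a" by (subst eq) simp
    finally have Na: "N = \<eta> a" .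
    have "\<eta> = (\<lambda>y. if y = a then N else 0)"
    proof (rule ext)
      fix y show "\<eta> y = (if y = a then N else 0)" using z Na by auto
    qed
    thus False using nE unfolding condensed_def by blast
  next
    case False
    hence eq: "\<eta> = (\<lambda>y. 0)" by auto
    hence "N = 0" using C by (simp add: config_space_def)
    hence "\<eta> = (\<lambda>y. if y = undefined then N else 0)" using eq by (auto simp: fun_eq_iff)
    thus False using nE unfolding condensed_def by blast
  qed
qed

lemma pt_alg:
  fixes a b r p q :: real
  assumes "a \<noteq> 0" "b + 1 \<noteq> 0"
  shows "a * b * r * (q / (b + 1) - p / a) = r * q * a - r * p * b - r * q * a / (b + 1)"
proof -
  have t2: "a * b * r * (p / a) = r * p * b" using assms(1) by simp
  have t1: "a * b * r * (q / (b + 1)) = r * q * a - r * q * a / (b + 1)"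
  proof -
    have "b / (b + 1) = 1 - 1 / (b + 1)" using assms(2) by (simp add: field_simps)
    hence "r * q * a * (b / (b + 1)) = r * q * a * (1 - 1 / (b + 1))" by simp
    thus ?thesis by (simp add: algebra_simps)
  qed
  show ?thesis using t1 t2 by (simp add: right_diff_distrib)
qed

lemma key:
  fixes r :: "'a::finite \<Rightarrow> 'a \<Rightarrow> real" and P :: "'a set \<Rightarrow> 'a \<Rightarrow> real"
    and \<mu> :: "('a \<Rightarrow> nat) \<Rightarrow> real" and N :: nat and dN rmin :: real
  assumes r_diag: "\<And>x. r x x = 0"
    and rmin_pos: "0 < rmin" and rmin_le: "\<And>x y. x \<noteq> y \<Longrightarrow> rmin \<le> r x y"
    and dpos: "0 < dN" and N1: "1 \<le> N"
    and P: "\<And>S. S \<noteq> {} \<Longrightarrow> (\<forall>x. 0 \<le> P S x) \<and> (\<forall>x. x \<notin> S \<longrightarrow> P S x = 0) \<and> sum (P S) UNIV = 1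
              \<and> (\<forall>x\<in>S. (\<Sum>y\<in>UNIV. (r x y - r y x) * P S y) \<le> 0)"
    and inv: "invariant_prob N dN r \<mu>"
  shows "(\<Sum>\<eta>\<in>config_space N - condensed N. \<mu> \<eta>) * (rmin / (real N + 1))
           \<le> dN * (real N * ((real N + 1) * real CARD('a) + real N) * (\<Sum>x\<in>UNIV. \<Sum>y\<in>UNIV. r x y))"
proof -
  define C where "C = (config_space N :: ('a \<Rightarrow> nat) set)"
  define E where "E = (condensed N :: ('a \<Rightarrow> nat) set)"
  define K where "K = real N + 1"
  define M where "M = K * real CARD('a) + real N"
  define Rt where "Rt = (\<Sum>x\<in>UNIV. \<Sum>y\<in>UNIV. r x y)"
  define Q where "Q \<eta> = P (occ \<eta>)" for \<eta> :: "'a \<Rightarrow> nat"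
  define F where "F \<eta> = K * real (card (occ \<eta>)) + (\<Sum>z\<in>UNIV. Q \<eta> z * hh (\<eta> z))" for \<eta>
  have r_nn: "0 \<le> r x y" for x y
    using rmin_pos rmin_le[of x y] r_diag[of x] by (cases "x = y") auto
  have finC: "finite C" unfolding C_def by (rule finite_config)
  have le_N: "\<eta> z \<le> N" if "\<eta> \<in> C" for \<eta> z
    using that le_sum_nat[of \<eta> z] unfolding C_def config_space_def by simp
  have occ_ne: "occ \<eta> \<noteq> {}" if "\<eta> \<in> C" for \<eta>
  proof
    assume "occ \<eta> = {}"
    hence "\<eta> = (\<lambda>_. 0)" unfolding occ_def by auto
    thus False using that N1 unfolding C_def config_space_def by simp
  qed
  have QP: "(\<forall>x. 0 \<le> Q \<eta> x) \<and> (\<forall>x. x \<notin> occ \<eta> \<longrightarrow> Q \<eta> x = 0) \<and> sum (Q \<eta>) UNIV = 1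
              \<and> (\<forall>x\<in>occ \<eta>. (\<Sum>y\<in>UNIV. (r x y - r y x) * Q \<eta> y) \<le> 0)" if "\<eta> \<in> C" for \<eta>
    unfolding Q_def using P[OF occ_ne[OF that]] .
  have Q_le1: "Q \<eta> x \<le> 1" if "\<eta> \<in> C" for \<eta> x
  proof -
    have "Q \<eta> x \<le> sum (Q \<eta>) UNIV" by (rule member_le_sum) (use QP[OF that] in auto)
    thus ?thesis using QP[OF that] by simp
  qed
  have Gbd: "0 \<le> (\<Sum>z\<in>UNIV. Q \<eta> z * hh (\<eta> z)) \<and> (\<Sum>z\<in>UNIV. Q \<eta> z * hh (\<eta> z)) \<le> real N"
    if "\<eta> \<in> C" for \<eta>
  proof
    show "0 \<le> (\<Sum>z\<in>UNIV. Q \<eta> z * hh (\<eta> z))"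
      using QP[OF that] hh_nonneg by (intro sum_nonneg mult_nonneg_nonneg) auto
    have "(\<Sum>z\<in>UNIV. Q \<eta> z * hh (\<eta> z)) \<le> (\<Sum>z\<in>UNIV. Q \<eta> z * real N)"
    proof (intro sum_mono mult_left_mono)
      fix z
      show "hh (\<eta> z) \<le> real N" using hh_le[of "\<eta> z"] le_N[OF that, of z] by linarith
      show "0 \<le> Q \<eta> z" using QP[OF that] by auto
    qed
    also have "\<dots> = real N" using QP[OF that] by (simp add: sum_distrib_right[symmetric])
    finally show "(\<Sum>z\<in>UNIV. Q \<eta> z * hh (\<eta> z)) \<le> real N" .
  qed
  have F_nn: "0 \<le> F \<eta>" if "\<eta> \<in> C" for \<eta>
    using Gbd[OF that] unfolding F_def K_def by simp
  have F_le: "F \<eta> \<le> M" if "\<eta> \<in> C" for \<eta>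
  proof -
    have "card (occ \<eta>) \<le> CARD('a)" by (rule card_mono) auto
    hence "K * real (card (occ \<eta>)) \<le> K * real CARD('a)" unfolding K_def
      by (intro mult_left_mono) auto
    thus ?thesis using Gbd[OF that] unfolding F_def M_def by linarith
  qed
  have move_C: "move x y \<eta> \<in> C" if "\<eta> \<in> C" "x \<noteq> y" for \<eta> x y
  proof (cases "1 \<le> \<eta> x")
    case True thus ?thesis using that move_sum[of x y \<eta>, OF that(2) True] unfolding C_def config_space_def by simp
  next
    case False thus ?thesis using that by (simp add: move_def)
  qed
  have step: "F (move x y \<eta>) - F \<eta> \<le> Q \<eta> y / (real (\<eta> y) + 1) - Q \<eta> x / real (\<eta> x)"
    if \<eta>C: "\<eta> \<in> C" and xy: "x \<noteq> y" and ex: "\<eta> x \<noteq> 0" and ey: "\<eta> y \<noteq> 0" for \<eta> x y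
  proof -
    define \<eta>' where "\<eta>' = move x y \<eta>"
    have \<eta>'C: "\<eta>' \<in> C" unfolding \<eta>'_def using move_C[OF \<eta>C xy] .
    have \<eta>'x: "\<eta>' x = \<eta> x - 1" and \<eta>'y: "\<eta>' y = \<eta> y + 1" and \<eta>'z: "\<And>z. z \<noteq> x \<Longrightarrow> z \<noteq> y \<Longrightarrow> \<eta>' z = \<eta> z"
      unfolding \<eta>'_def move_def using ex xy by auto
    have Qy: "0 \<le> Q \<eta> y" using QP[OF \<eta>C] by auto
    show ?thesis
    proof (cases "\<eta> x = 1")
      case False
      have occ_eq: "occ \<eta>' = occ \<eta>"
        unfolding occ_def
      proof (rule Collect_cong)
        fix z show "(\<eta>' z \<noteq> 0) = (\<eta> z \<noteq> 0) "
          using False ex ey \<eta>'x \<eta>'y \<eta>'z by (cases "z = x"; cases "z = y") auto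
      qed
      hence Qeq: "Q \<eta>' = Q \<eta>" unfolding Q_def by simp
      obtain k where k: "\<eta> x = Suc k" using ex by (cases "\<eta> x") auto
      have pt: "Q \<eta> z * hh (\<eta>' z) - Q \<eta> z * hh (\<eta> z)
          = (if z = x then - Q \<eta> x / real (\<eta> x) else 0) + (if z = y then Q \<eta> y / (real (\<eta> y) + 1) else 0)" for z
      proof -
        consider "z = x" | "z = y" | "z \<noteq> x \<and> z \<noteq> y" by blast
        thus ?thesis
        proof cases
          case 1 thus ?thesis using xy \<eta>'x k by (simp add: hh_Suc algebra_simps)
        next
          case 2 thus ?thesis using xy \<eta>'y by (simp add: hh_Suc algebra_simps add.commute)
        next
          case 3 thus ?thesis using \<eta>'z by simp
        qed
      qed
      have "F \<eta>' - F \<eta> = (\<Sum>z\<in>UNIV. Q \<eta> z * hh (\<eta>' z) - Q \<eta> z * hh (\<eta> z))"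
        unfolding F_def occ_eq Qeq by (simp add: sum_subtractf)
      also have "\<dots> = Q \<eta> y / (real (\<eta> y) + 1) - Q \<eta> x / real (\<eta> x)"
        unfolding pt by (simp add: sum.distrib)
      finally show ?thesis unfolding \<eta>'_def by simp
    next
      case True
      have occ_eq: "occ \<eta>' = occ \<eta> - {x}"
        unfolding occ_def
      proof (intro set_eqI)
        fix z show "z \<in> {w. \<eta>' w \<noteq> 0} \<longleftrightarrow> z \<in> {w. \<eta> w \<noteq> 0} - {x}"
          using True ex ey \<eta>'x \<eta>'y \<eta>'z by (cases "z = x"; cases "z = y") auto
      qed
      have xo: "x \<in> occ \<eta>" using ex unfolding occ_def by simp
      have cd: "real (card (occ \<eta>')) = real (card (occ \<eta>)) - 1"
      proof -
        have "0 < card (occ \<eta>)" using xo by (auto simp: card_gt_0_iff)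
        thus ?thesis unfolding occ_eq using xo by (simp add: card_Diff_singleton of_nat_diff)
      qed
      have "F \<eta>' \<le> K * (real (card (occ \<eta>)) - 1) + real N"
        using Gbd[OF \<eta>'C] unfolding F_def cd by linarith
      moreover have "K * real (card (occ \<eta>)) \<le> F \<eta>" using Gbd[OF \<eta>C] unfolding F_def by linarith
      moreover have "Q \<eta> x / real (\<eta> x) \<le> 1" using True Q_le1[OF \<eta>C, of x] by simp
      moreover have "0 \<le> Q \<eta> y / (real (\<eta> y) + 1)" using Qy by simp
      ultimately show ?thesis unfolding \<eta>'_def K_def by (simp add: algebra_simps)
    qed
  qed
  have gen_le: "incl_gen dN r F \<eta> \<le> dN * (real N * M * Rt) - (if \<eta> \<in> E then 0 else rmin / K)"
    if \<eta>C: "\<eta> \<in> C" for \<eta>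
  proof -
    define e where "e z = real (\<eta> z)" for z
    define D where "D x y = F (move x y \<eta>) - F \<eta>" for x y
    have e_nn: "0 \<le> e z" for z unfolding e_def by simp
    have e_le: "e z \<le> real N" for z unfolding e_def using le_N[OF \<eta>C, of z] by simp
    have QPe: "(\<forall>x. 0 \<le> Q \<eta> x) \<and> (\<forall>x. x \<notin> occ \<eta> \<longrightarrow> Q \<eta> x = 0) \<and> sum (Q \<eta>) UNIV = 1
              \<and> (\<forall>x\<in>occ \<eta>. (\<Sum>y\<in>UNIV. (r x y - r y x) * Q \<eta> y) \<le> 0)" using QP[OF \<eta>C] .
    have Q_nn: "0 \<le> Q \<eta> z" for z using QPe by auto
    have Q0: "\<eta> z = 0 \<Longrightarrow> Q \<eta> z = 0" for z using QPe unfolding occ_def by auto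
    define Gs where "Gs = (\<Sum>x\<in>UNIV. \<Sum>y\<in>UNIV. e x * e y * r x y * D x y)"
    define Hs where "Hs = (\<Sum>x\<in>UNIV. \<Sum>y\<in>UNIV. e x * r x y * D x y)"
    have split: "incl_gen dN r F \<eta> = Gs + dN * Hs"
    proof -
      have inner: "(\<Sum>y\<in>UNIV - {x}. real (\<eta> x) * (dN + real (\<eta> y)) * r x y * (F (move x y \<eta>) - F \<eta>))
          = (\<Sum>y\<in>UNIV. e x * e y * r x y * D x y + dN * (e x * r x y * D x y))" for x
        by (simp add: sum_diff1 r_diag e_def D_def algebra_simps)
      show ?thesis unfolding incl_gen_def inner Gs_def Hs_def
        by (simp add: sum.distrib sum_distrib_left)
    qed
    have Hs_le: "Hs \<le> real N * M * Rt"
    proof -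
      have M_nn: "0 \<le> M" using F_nn[OF \<eta>C] F_le[OF \<eta>C] by linarith
      have "Hs \<le> (\<Sum>x\<in>UNIV. \<Sum>y\<in>UNIV. real N * M * r x y)"
        unfolding Hs_def
      proof (intro sum_mono)
        fix x y
        show "e x * r x y * D x y \<le> real N * M * r x y"
        proof (cases "x = y")
          case True thus ?thesis by (simp add: r_diag)
        next
          case False
          have "D x y \<le> M" unfolding D_def using F_le[OF move_C[OF \<eta>C False]] F_nn[OF \<eta>C] by linarith
          hence "e x * r x y * D x y \<le> e x * r x y * M"
            using e_nn r_nn by (intro mult_left_mono) auto
          also have "\<dots> \<le> real N * r x y * M"
            using e_le r_nn M_nn by (intro mult_right_mono) auto
          finally show ?thesis by (simp add: algebra_simps)
        qed
      qed
      also have "\<dots> = real N * M * Rt" unfolding Rt_def by (simp add: sum_distrib_left)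
      finally show ?thesis .
    qed
    define W where "W = (\<Sum>y\<in>UNIV. Q \<eta> y * (\<Sum>x\<in>UNIV. r x y * e x / (e y + 1)))"
    define A where "A = (\<Sum>x\<in>UNIV. e x * (\<Sum>y\<in>UNIV. (r x y - r y x) * Q \<eta> y))"
    define \<Phi> where "\<Phi> = (\<Sum>x\<in>UNIV. \<Sum>y\<in>UNIV. e x * e y * r x y * (Q \<eta> y / (e y + 1) - Q \<eta> x / e x))"
    have Gs_le: "Gs \<le> \<Phi>"
      unfolding Gs_def \<Phi>_def
    proof (intro sum_mono)
      fix x y
      show "e x * e y * r x y * D x y \<le> e x * e y * r x y * (Q \<eta> y / (e y + 1) - Q \<eta> x / e x)"
      proof (cases "x = y \<or> \<eta> x = 0 \<or> \<eta> y = 0")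
        case True thus ?thesis by (auto simp: r_diag e_def)
      next
        case False
        hence "D x y \<le> Q \<eta> y / (e y + 1) - Q \<eta> x / e x"
          unfolding D_def e_def using step[OF \<eta>C] by auto
        thus ?thesis using e_nn r_nn by (intro mult_left_mono) auto
      qed
    qed
    have Phi_eq: "\<Phi> = A - W"
    proof -
      have pt: "e x * e y * r x y * (Q \<eta> y / (e y + 1) - Q \<eta> x / e x)
          = r x y * Q \<eta> y * e x - r x y * Q \<eta> x * e y - r x y * Q \<eta> y * e x / (e y + 1)" for x y
      proof (cases "\<eta> x = 0")
        case True thus ?thesis using Q0[of x] by (simp add: e_def)
      next
        case False
        hence "e x \<noteq> 0" unfolding e_def by simp
        moreover have "e y + 1 \<noteq> 0" using e_nn[of y] by linarith
        ultimately show ?thesis by (rule pt_alg)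
      qed
      have "\<Phi> = (\<Sum>x\<in>UNIV. \<Sum>y\<in>UNIV. r x y * Q \<eta> y * e x) - (\<Sum>x\<in>UNIV. \<Sum>y\<in>UNIV. r x y * Q \<eta> x * e y)
               - (\<Sum>x\<in>UNIV. \<Sum>y\<in>UNIV. r x y * Q \<eta> y * e x / (e y + 1))"
        unfolding \<Phi>_def pt by (simp add: sum_subtractf)
      also have "(\<Sum>x\<in>UNIV. \<Sum>y\<in>UNIV. r x y * Q \<eta> x * e y) = (\<Sum>x\<in>UNIV. \<Sum>y\<in>UNIV. r y x * Q \<eta> y * e x)"
        by (rule sum.swap)
      also have "(\<Sum>x\<in>UNIV. \<Sum>y\<in>UNIV. r x y * Q \<eta> y * e x / (e y + 1)) = W"
        unfolding W_def by (subst sum.swap) (simp add: sum_distrib_left algebra_simps)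
      also have "(\<Sum>x\<in>UNIV. \<Sum>y\<in>UNIV. r x y * Q \<eta> y * e x) - (\<Sum>x\<in>UNIV. \<Sum>y\<in>UNIV. r y x * Q \<eta> y * e x) = A"
        unfolding A_def by (simp add: sum_subtractf[symmetric] sum_distrib_left algebra_simps)
      finally show ?thesis .
    qed
    have A_le: "A \<le> 0"
      unfolding A_def
    proof (intro sum_nonpos)
      fix x
      show "e x * (\<Sum>y\<in>UNIV. (r x y - r y x) * Q \<eta> y) \<le> 0"
      proof (cases "\<eta> x = 0")
        case True thus ?thesis by (simp add: e_def)
      next
        case False
        hence "x \<in> occ \<eta>" unfolding occ_def by simp
        hence "(\<Sum>y\<in>UNIV. (r x y - r y x) * Q \<eta> y) \<le> 0" using QPe by blast
        thus ?thesis using e_nn[of x] by (simp add: mult_nonneg_nonpos)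
      qed
    qed
    have W_nn: "0 \<le> W"
      unfolding W_def using Q_nn r_nn e_nn
      by (intro sum_nonneg mult_nonneg_nonneg divide_nonneg_nonneg add_nonneg_nonneg) auto
    have W_ge: "rmin / K \<le> W" if nE: "\<eta> \<notin> E"
    proof -
      obtain a b where ab: "a \<noteq> b" "\<eta> a \<noteq> 0" "\<eta> b \<noteq> 0"
        using not_condensed[of \<eta> N] \<eta>C nE unfolding C_def E_def by blast
      have K_pos: "0 < K" unfolding K_def by simp
      have "(\<Sum>y\<in>UNIV. Q \<eta> y * (rmin / K)) \<le> W"
        unfolding W_def
      proof (intro sum_mono)
        fix y
        show "Q \<eta> y * (rmin / K) \<le> Q \<eta> y * (\<Sum>x\<in>UNIV. r x y * e x / (e y + 1))"
        proof (cases "\<eta> y = 0")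
          case True thus ?thesis using Q0[of y] by simp
        next
          case False
          define x0 where "x0 = (if y = a then b else a)"
          have x0: "x0 \<noteq> y" "\<eta> x0 \<noteq> 0" unfolding x0_def using ab by auto
          have ey1: "0 < e y + 1" using e_nn[of y] by linarith
          have eyK: "e y + 1 \<le> K" unfolding K_def using e_le[of y] by linarith
          have ex0: "1 \<le> e x0" unfolding e_def using x0 by simp
          have "rmin / K \<le> r x0 y / K" using rmin_le[OF x0(1)] K_pos by (simp add: divide_right_mono)
          also have "\<dots> \<le> r x0 y * e x0 / K"
            using ex0 r_nn[of x0 y] K_pos by (intro divide_right_mono) (auto simp: mult_le_cancel_left1)
          also have "\<dots> \<le> r x0 y * e x0 / (e y + 1)"
            using ey1 eyK r_nn[of x0 y] e_nn[of x0] by (intro divide_left_mono) auto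
          also have "\<dots> \<le> (\<Sum>x\<in>UNIV. r x y * e x / (e y + 1))"
            using r_nn e_nn ey1 by (intro member_le_sum) auto
          finally show ?thesis using Q_nn[of y] by (intro mult_left_mono) auto
        qed
      qed
      moreover have "(\<Sum>y\<in>UNIV. Q \<eta> y * (rmin / K)) = rmin / K"
      proof -
        have "(\<Sum>y\<in>UNIV. Q \<eta> y * (rmin / K)) = sum (Q \<eta>) UNIV * (rmin / K)"
          by (simp only: sum_distrib_right)
        thus ?thesis using QPe by simp
      qed
      ultimately show ?thesis by simp
    qed
    have "incl_gen dN r F \<eta> \<le> \<Phi> + dN * (real N * M * Rt)"
      unfolding split using Gs_le Hs_le dpos by (simp add: add_mono mult_left_mono)
    thus ?thesis using Phi_eq A_le W_nn W_ge by (cases "\<eta> \<in> E") auto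
  qed
  define c where "c = dN * (real N * M * Rt)"
  define ind where "ind \<eta> = (if \<eta> \<in> E then 0 else rmin / K)" for \<eta>
  have mu_nn: "\<And>\<eta>. 0 \<le> \<mu> \<eta>" and mu_sum: "(\<Sum>\<eta>\<in>C. \<mu> \<eta>) = 1"
    and mu_gen: "(\<Sum>\<eta>\<in>C. \<mu> \<eta> * incl_gen dN r F \<eta>) = 0"
    using inv unfolding invariant_prob_def C_def by auto
  have "0 \<le> (\<Sum>\<eta>\<in>C. \<mu> \<eta> * (c - ind \<eta>))"
    unfolding mu_gen[symmetric] using gen_le mu_nn unfolding c_def ind_def
    by (intro sum_mono mult_left_mono) auto
  also have "\<dots> = c - (\<Sum>\<eta>\<in>C. \<mu> \<eta> * ind \<eta>)"
  proof -
    have "(\<Sum>\<eta>\<in>C. \<mu> \<eta> * (c - ind \<eta>)) = (\<Sum>\<eta>\<in>C. c * \<mu> \<eta>) - (\<Sum>\<eta>\<in>C. \<mu> \<eta> * ind \<eta>)"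
      by (simp add: right_diff_distrib sum_subtractf mult.commute)
    moreover have "(\<Sum>\<eta>\<in>C. c * \<mu> \<eta>) = c * (\<Sum>\<eta>\<in>C. \<mu> \<eta>)" by (simp only: sum_distrib_left)
    ultimately show ?thesis using mu_sum by simp
  qed
  also have "(\<Sum>\<eta>\<in>C. \<mu> \<eta> * ind \<eta>) = (\<Sum>\<eta>\<in>C - E. \<mu> \<eta> * ind \<eta>)"
    using finC by (intro sum.mono_neutral_right) (auto simp: ind_def)
  also have "\<dots> = (\<Sum>\<eta>\<in>C - E. \<mu> \<eta>) * (rmin / K)"
  proof -
    have "(\<Sum>\<eta>\<in>C - E. \<mu> \<eta> * ind \<eta>) = (\<Sum>\<eta>\<in>C - E. \<mu> \<eta> * (rmin / K))"
      by (intro sum.cong refl) (simp add: ind_def)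
    also have "\<dots> = (\<Sum>\<eta>\<in>C - E. \<mu> \<eta>) * (rmin / K)" by (simp only: sum_distrib_right)
    finally show ?thesis .
  qed
  finally show ?thesis unfolding c_def M_def K_def Rt_def C_def E_def by simp
qed

lemma dbound:
  fixes \<kappa> N :: nat and dd :: real
  assumes k2: "2 \<le> \<kappa>" and N3: "3 \<le> N" and dpos: "0 < dd"
  shows "dd * real N ^ 3 \<le> dd * real N ^ (\<kappa> + 2) * ln (real N) powr (real \<kappa> - 3)"
proof -
  have n3: "3 \<le> real N" using N3 by simp
  have lnpos: "0 < ln (real N)" using n3 by simp
  show ?thesis
  proof (cases "\<kappa> = 2")
    case True
    have "ln (real N) powr (real \<kappa> - 3) = 1 / ln (real N)"
      using True lnpos by (simp add: powr_minus_divide)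
    moreover have "ln (real N) \<le> real N" using ln_le_minus_one[of "real N"] n3 by simp
    moreover have "dd * real N ^ 3 * ln (real N) \<le> dd * real N ^ 3 * real N"
      using calculation(2) dpos n3 by (intro mult_left_mono) auto
    ultimately show ?thesis using True lnpos
      by (simp add: field_simps power_Suc eval_nat_numeral)
  next
    case False
    hence k3: "3 \<le> \<kappa>" using k2 by simp
    have "exp 1 \<le> (3::real)" using exp_le by simp
    hence "1 \<le> ln (real N)" using n3
      by (metis exp_gt_zero exp_le_cancel_iff exp_ln less_le_trans order_trans zero_less_numeral)
    hence pw: "1 \<le> ln (real N) powr (real \<kappa> - 3)" using k3 by (intro ge_one_powr_ge_zero) auto
    have "real N ^ 3 \<le> real N ^ (\<kappa> + 2)" using n3 k3 by (intro power_increasing) auto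
    hence "dd * real N ^ 3 \<le> dd * real N ^ (\<kappa> + 2)" using dpos by simp
    also have "\<dots> \<le> dd * real N ^ (\<kappa> + 2) * ln (real N) powr (real \<kappa> - 3)"
    proof -
      have "0 \<le> dd * real N ^ (\<kappa> + 2)" using dpos n3 by simp
      from mult_left_mono[OF pw this] show ?thesis by simp
    qed
    finally show ?thesis .
  qed
qed

theorem theorem3p15:
  fixes r :: "'a::finite \<Rightarrow> 'a \<Rightarrow> real"
    and d :: "nat \<Rightarrow> real"
    and \<mu> :: "nat \<Rightarrow> ('a \<Rightarrow> nat) \<Rightarrow> real"
  assumes r_pos: "\<And>x y. x \<noteq> y \<Longrightarrow> r x y > 0"
    and r_diag: "\<And>x. r x x = 0"
    and d_pos: "\<And>N. d N > 0"
    and d_lim: "(\<lambda>N. d N * real N ^ (CARD('a) + 2) * ln (real N) powr (real CARD('a) - 3))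
                  \<longlonglongrightarrow> 0"
    and mu_inv: "\<And>N. invariant_prob N (d N) r (\<mu> N)"
  shows "(\<lambda>N. \<Sum>\<eta>\<in>condensed N. \<mu> N \<eta>) \<longlonglongrightarrow> 1"
proof (cases "CARD('a) = 1")
  case True
  then obtain a :: 'a where U: "UNIV = {a}" using card_1_singletonE by blast
  have "(\<Sum>\<eta>\<in>condensed N. \<mu> N \<eta>) = 1" for N
  proof -
    have "config_space N \<subseteq> (condensed N :: ('a \<Rightarrow> nat) set)"
    proof
      fix \<eta> :: "'a \<Rightarrow> nat" assume "\<eta> \<in> config_space N"
      hence "\<eta> a = N" unfolding config_space_def U by simp
      hence "\<eta> = (\<lambda>y. if y = a then N else 0)" using U by (auto simp: fun_eq_iff)
      thus "\<eta> \<in> condensed N" unfolding condensed_def by blast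
    qed
    hence "condensed N = (config_space N :: ('a \<Rightarrow> nat) set)" using condensed_sub by blast
    thus ?thesis using mu_inv[of N] unfolding invariant_prob_def by simp
  qed
  thus ?thesis by simp
next
  case False
  have "CARD('a) \<noteq> 0" by simp
  hence k2: "2 \<le> CARD('a)" using False by linarith
  obtain a b :: 'a where ab: "a \<noteq> b"
  proof -
    have "1 < CARD('a)" using k2 by simp
    then obtain a b :: 'a where "a \<noteq> b" using card_le_Suc0_iff_eq[of "UNIV :: 'a set"] by force
    thus ?thesis using that by blast
  qed
  define Rset where "Rset = (\<lambda>(x, y). r x y) ` {(x::'a, y). x \<noteq> y}"
  define rmin where "rmin = Min Rset"
  have finR: "finite Rset" unfolding Rset_def by simp
  have neR: "Rset \<noteq> {}" unfolding Rset_def using ab by blast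
  have rmin_pos: "0 < rmin" unfolding rmin_def using finR neR r_pos
    by (subst Min_gr_iff) (auto simp: Rset_def)
  have rmin_le: "rmin \<le> r x y" if "x \<noteq> y" for x y
    unfolding rmin_def using finR that by (intro Min_le) (auto simp: Rset_def)
  have "\<forall>S. \<exists>p. S \<noteq> {} \<longrightarrow> (\<forall>x. 0 \<le> p x) \<and> (\<forall>x. x \<notin> S \<longrightarrow> p x = 0) \<and> sum p UNIV = 1
              \<and> (\<forall>x\<in>S. (\<Sum>y\<in>UNIV. (r x y - r y x) * p y) \<le> 0)"
  proof
    fix S :: "'a set"
    show "\<exists>p. S \<noteq> {} \<longrightarrow> (\<forall>x. 0 \<le> p x) \<and> (\<forall>x. x \<notin> S \<longrightarrow> p x = 0) \<and> sum p UNIV = 1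
              \<and> (\<forall>x\<in>S. (\<Sum>y\<in>UNIV. (r x y - r y x) * p y) \<le> 0)"
    proof (cases "S = {}")
      case True thus ?thesis by blast
    next
      case False
      from skew_equilibrium[of "\<lambda>x y. r x y - r y x" S] False
      show ?thesis by auto
    qed
  qed
  then obtain P where P: "\<And>S. S \<noteq> {} \<Longrightarrow> (\<forall>x. 0 \<le> P S x) \<and> (\<forall>x. x \<notin> S \<longrightarrow> P S x = 0) \<and> sum (P S) UNIV = 1
              \<and> (\<forall>x\<in>S. (\<Sum>y\<in>UNIV. (r x y - r y x) * P S y) \<le> 0)"
    by metis
  define Rt where "Rt = (\<Sum>x\<in>UNIV. \<Sum>y\<in>UNIV. r x y)"
  define \<kappa> where "\<kappa> = real CARD('a)"
  define a_N where "a_N N = d N * real N ^ (CARD('a) + 2) * ln (real N) powr (real CARD('a) - 3)" for N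
  define Cst where "Cst = 4 * (\<kappa> + 1) * Rt / rmin"
  have Rt_nn: "0 \<le> Rt" unfolding Rt_def
  proof (intro sum_nonneg)
    fix x y show "0 \<le> r x y" using r_pos[of x y] r_diag[of x] by (cases "x = y") auto
  qed
  have bounds: "1 - Cst * a_N N \<le> (\<Sum>\<eta>\<in>condensed N. \<mu> N \<eta>) \<and> (\<Sum>\<eta>\<in>condensed N. \<mu> N \<eta>) \<le> 1"
    if N3: "3 \<le> N" for N
  proof -
    define m where "m = (\<Sum>\<eta>\<in>config_space N - condensed N. \<mu> N \<eta>)"
    have mu_nn: "\<And>\<eta>. 0 \<le> \<mu> N \<eta>" and mu_sum: "(\<Sum>\<eta>\<in>config_space N. \<mu> N \<eta>) = 1"
      using mu_inv[of N] unfolding invariant_prob_def by auto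
    have mE: "(\<Sum>\<eta>\<in>condensed N. \<mu> N \<eta>) = 1 - m"
      unfolding m_def using sum_diff[OF finite_config condensed_sub, of "\<mu> N" N] mu_sum by simp
    have m_nn: "0 \<le> m" unfolding m_def using mu_nn by (intro sum_nonneg) auto
    define n where "n = real N"
    have n3: "3 \<le> n" unfolding n_def using N3 by simp
    have keyN: "m * (rmin / (n + 1)) \<le> d N * (n * ((n + 1) * \<kappa> + n) * Rt)"
      using key[OF r_diag rmin_pos rmin_le d_pos _ P mu_inv[of N]] N3
      unfolding m_def n_def \<kappa>_def Rt_def by simp
    have h1: "m * rmin \<le> d N * (n * ((n + 1) * \<kappa> + n) * Rt) * (n + 1)"
    proof -
      have "m * rmin = m * (rmin / (n + 1)) * (n + 1)" using n3 by simp
      also have "\<dots> \<le> d N * (n * ((n + 1) * \<kappa> + n) * Rt) * (n + 1)"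
        using keyN n3 by (intro mult_right_mono) auto
      finally show ?thesis .
    qed
    have k_nn: "0 \<le> \<kappa>" unfolding \<kappa>_def by simp
    have h2: "n * ((n + 1) * \<kappa> + n) * (n + 1) \<le> 4 * (\<kappa> + 1) * n ^ 3"
    proof -
      have "(n + 1) * \<kappa> + n \<le> 2 * n * (\<kappa> + 1)"
      proof -
        have "\<kappa> * 1 \<le> \<kappa> * n" using n3 k_nn by (intro mult_left_mono) auto
        thus ?thesis using n3 by (simp add: algebra_simps)
      qed
      moreover have "n + 1 \<le> 2 * n" using n3 by simp
      ultimately have "n * ((n + 1) * \<kappa> + n) * (n + 1) \<le> n * (2 * n * (\<kappa> + 1)) * (2 * n)"
        using n3 k_nn by (intro mult_mono) auto
      thus ?thesis by (simp add: algebra_simps power3_eq_cube)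
    qed
    have h3: "d N * n ^ 3 \<le> a_N N"
      unfolding a_N_def n_def using dbound[OF k2 N3 d_pos] .
    have "m * rmin \<le> d N * Rt * (n * ((n + 1) * \<kappa> + n) * (n + 1))"
      using h1 by (simp add: algebra_simps)
    also have "\<dots> \<le> d N * Rt * (4 * (\<kappa> + 1) * n ^ 3)"
      using h2 d_pos[of N] Rt_nn by (intro mult_left_mono) auto
    also have "\<dots> = (d N * n ^ 3) * (4 * (\<kappa> + 1) * Rt)" by (simp add: algebra_simps)
    also have "\<dots> \<le> a_N N * (4 * (\<kappa> + 1) * Rt)"
      using h3 Rt_nn k_nn by (intro mult_right_mono) auto
    finally have "m * rmin \<le> a_N N * (4 * (\<kappa> + 1) * Rt)" .
    hence "m \<le> Cst * a_N N" unfolding Cst_def using rmin_pos by (simp add: field_simps)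
    thus ?thesis using mE m_nn by simp
  qed
  have lim_low: "(\<lambda>N. 1 - Cst * a_N N) \<longlonglongrightarrow> 1"
  proof -
    have "a_N \<longlonglongrightarrow> 0" unfolding a_N_def using d_lim by simp
    hence "(\<lambda>N. 1 - Cst * a_N N) \<longlonglongrightarrow> 1 - Cst * 0" by (intro tendsto_intros)
    thus ?thesis by simp
  qed
  show ?thesis
  proof (rule tendsto_sandwich[OF _ _ lim_low tendsto_const])
    show "\<forall>\<^sub>F N in sequentially. 1 - Cst * a_N N \<le> (\<Sum>\<eta>\<in>condensed N. \<mu> N \<eta>)"
      using bounds eventually_at_top_linorder by blast
    show "\<forall>\<^sub>F N in sequentially. (\<Sum>\<eta>\<in>condensed N. \<mu> N \<eta>) \<le> 1"
      using bounds eventually_at_top_linorder by blast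
  qed
qed

end
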